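(* Let $R$ be a commutative ring with nonzero identity, $\delta$ an expansion of ideals of $R$, and $I$ a proper ideal of $R$ with $\sqrt{\delta(I)}=\delta(\sqrt{I})$. If $I$ is a $\delta$-$n$-ideal of $R$, then $\sqrt{I}$ is a $\delta$-$n$-ideal of $R$. In particular, $I$ is a quasi $n$-ideal of $R$ if and only if $\sqrt{I}$ is an $n$-ideal of $R$.
   Context: An expansion of ideals of a ring $R$ is a map $\delta$ from the set of ideals of $R$ to itself such that $I\subseteq\delta(I)$ for every ideal $I$, and $\delta(I)\subseteq\delta(J)$ whenever $I\subseteq J$. $\sqrt{0}$ denotes the nilradical of $R$. Given an expansion $\delta$, a proper ideal $I$ of $R$ is a $\delta$-$n$-ideal if whenever $a,b\in R$ with $ab\in I$ and $a\notin\sqrt{0}$, then $b\in\delta(I)$. A quasi $n$-ideal is a $\delta_1$-$n$-ideal, where $\delta_1(J)=\sqrt{J}$. An $n$-ideal is a proper ideal $I$ such that $ab\in I$ and $a\notin\sqrt{0}$ imply $b\in I$. *)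

theory Defs
  imports "HOL-Algebra.Ideal"
begin

definition rad :: "('a, 'b) ring_scheme \<Rightarrow> 'a set \<Rightarrow> 'a set" where
  "rad R I = {a \<in> carrier R. \<exists>n::nat. a [^]\<^bsub>R\<^esub> n \<in> I}"

definition nilrad :: "('a, 'b) ring_scheme \<Rightarrow> 'a set" where
  "nilrad R = rad R {\<zero>\<^bsub>R\<^esub>}"

definition expansion :: "('a, 'b) ring_scheme \<Rightarrow> ('a set \<Rightarrow> 'a set) \<Rightarrow> bool" where
  "expansion R \<delta> \<longleftrightarrow>
     (\<forall>I. ideal I R \<longrightarrow> ideal (\<delta> I) R \<and> I \<subseteq> \<delta> I) \<and>
     (\<forall>I J. ideal I R \<longrightarrow> ideal J R \<longrightarrow> I \<subseteq> J \<longrightarrow> \<delta> I \<subseteq> \<delta> J)"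

definition delta_n_ideal :: "('a, 'b) ring_scheme \<Rightarrow> ('a set \<Rightarrow> 'a set) \<Rightarrow> 'a set \<Rightarrow> bool" where
  "delta_n_ideal R \<delta> I \<longleftrightarrow> ideal I R \<and> I \<noteq> carrier R \<and>
     (\<forall>a \<in> carrier R. \<forall>b \<in> carrier R.
        a \<otimes>\<^bsub>R\<^esub> b \<in> I \<longrightarrow> a \<notin> nilrad R \<longrightarrow> b \<in> \<delta> I)"

definition quasi_n_ideal :: "('a, 'b) ring_scheme \<Rightarrow> 'a set \<Rightarrow> bool" where
  "quasi_n_ideal R I \<longleftrightarrow> delta_n_ideal R (rad R) I"

definition n_ideal :: "('a, 'b) ring_scheme \<Rightarrow> 'a set \<Rightarrow> bool" where
  "n_ideal R I \<longleftrightarrow> ideal I R \<and> I \<noteq> carrier R \<and>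
     (\<forall>a \<in> carrier R. \<forall>b \<in> carrier R.
        a \<otimes>\<^bsub>R\<^esub> b \<in> I \<longrightarrow> a \<notin> nilrad R \<longrightarrow> b \<in> I)"

end

theory Submission
  imports Defs
begin

context cring
begin

lemma pow_in_ideal_ge:
  assumes "ideal I R" "a \<in> carrier R" "a [^] (m::nat) \<in> I" "m \<le> k"
  shows "a [^] k \<in> I"
proof -
  have "a [^] k = a [^] m \<otimes> a [^] (k - m)"
    using assms by (simp add: nat_pow_mult)
  then show ?thesis using assms ideal.I_r_closed by fastforce
qed

lemma rad_sum_aux:
  assumes I: "ideal I R" and a: "a \<in> carrier R" and b: "b \<in> carrier R"
    and am: "a [^] (m::nat) \<in> I" and bn: "b [^] (n::nat) \<in> I"
  shows "\<forall>i j::nat. m + n \<le> i + j + k \<longrightarrow> a [^] i \<otimes> b [^] j \<otimes> (a \<oplus> b) [^] k \<in> I"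
proof (induction k)
  case 0
  show ?case
  proof (intro allI impI)
    fix i j :: nat assume "m + n \<le> i + j + 0"
    then have "m \<le> i \<or> n \<le> j" by linarith
    then show "a [^] i \<otimes> b [^] j \<otimes> (a \<oplus> b) [^] (0::nat) \<in> I"
    proof
      assume "m \<le> i"
      then have "a [^] i \<in> I" using pow_in_ideal_ge[OF I a am] by blast
      then show ?thesis using I a b ideal.I_r_closed by fastforce
    next
      assume "n \<le> j"
      then have "b [^] j \<in> I" using pow_in_ideal_ge[OF I b bn] by blast
      then show ?thesis using I a b ideal.I_l_closed by fastforce
    qed
  qed
next
  case (Suc k)
  show ?case
  proof (intro allI impI)
    fix i j :: nat assume h: "m + n \<le> i + j + Suc k"
    have e: "a [^] i \<otimes> b [^] j \<otimes> (a \<oplus> b) [^] Suc k =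
      a [^] Suc i \<otimes> b [^] j \<otimes> (a \<oplus> b) [^] k \<oplus> a [^] i \<otimes> b [^] Suc j \<otimes> (a \<oplus> b) [^] k"
      using a b by (simp add: nat_pow_Suc2 m_ac r_distr l_distr)
    have "a [^] Suc i \<otimes> b [^] j \<otimes> (a \<oplus> b) [^] k \<in> I"
      using Suc h by (metis add_Suc add_Suc_right)
    moreover have "a [^] i \<otimes> b [^] Suc j \<otimes> (a \<oplus> b) [^] k \<in> I"
      using Suc h by (metis add_Suc add_Suc_right)
    ultimately show "a [^] i \<otimes> b [^] j \<otimes> (a \<oplus> b) [^] Suc k \<in> I"
      using e I by (simp add: additive_subgroup.a_closed ideal.axioms(1))
  qed
qed

lemma rad_ideal:
  assumes I: "ideal I R"
  shows "ideal (rad R I) R"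
proof (rule idealI)
  show "ring R" by (rule ring_axioms)
  show "subgroup (rad R I) (add_monoid R)"
  proof (rule group.subgroupI)
    show "group (add_monoid R)" by (rule a_group)
    show "rad R I \<subseteq> carrier (add_monoid R)" by (auto simp: rad_def)
    have "\<zero> [^] (1::nat) \<in> I" using I by (simp add: additive_subgroup.zero_closed ideal.axioms(1))
    then have "\<zero> \<in> rad R I" unfolding rad_def by blast
    then show "rad R I \<noteq> {}" by blast
  next
    fix x assume "x \<in> rad R I"
    then obtain n where x: "x \<in> carrier R" "x [^] (n::nat) \<in> I" by (auto simp: rad_def)
    have "(\<ominus> x) [^] n = (\<ominus> \<one>) [^] n \<otimes> x [^] n"
    proof -
      have "\<ominus> x = (\<ominus> \<one>) \<otimes> x" using x by (simp add: l_minus)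
      then show ?thesis using x by (simp add: pow_mult_distrib[OF m_comm])
    qed
    then have "(\<ominus> x) [^] n \<in> I" using x I ideal.I_l_closed by fastforce
    then show "inv\<^bsub>add_monoid R\<^esub> x \<in> rad R I"
      using x by (auto simp: rad_def a_inv_def[symmetric])
  next
    fix x y assume "x \<in> rad R I" "y \<in> rad R I"
    then obtain m n where x: "x \<in> carrier R" "x [^] (m::nat) \<in> I"
      and y: "y \<in> carrier R" "y [^] (n::nat) \<in> I" by (auto simp: rad_def)
    have "x [^] (0::nat) \<otimes> y [^] (0::nat) \<otimes> (x \<oplus> y) [^] (m+n) \<in> I"
      using spec[OF spec[OF rad_sum_aux[OF I x(1) y(1) x(2) y(2), of "m+n"], of 0], of 0] by simp
    then have "(x \<oplus> y) [^] (m+n) \<in> I" using x y by simp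
    then show "x \<otimes>\<^bsub>add_monoid R\<^esub> y \<in> rad R I" using x y by (auto simp: rad_def)
  qed
next
  fix a x assume "a \<in> rad R I" "x \<in> carrier R"
  then obtain n where a: "a \<in> carrier R" "a [^] (n::nat) \<in> I" and x: "x \<in> carrier R" by (auto simp: rad_def)
  have "(x \<otimes> a) [^] n = x [^] n \<otimes> a [^] n" using a x by (simp add: pow_mult_distrib m_comm)
  then have "(x \<otimes> a) [^] n \<in> I" using a x I ideal.I_l_closed by fastforce
  then show "x \<otimes> a \<in> rad R I" using a x by (auto simp: rad_def)
  then show "a \<otimes> x \<in> rad R I" using a x by (simp add: m_comm)
qed


lemma subset_rad: "I \<subseteq> carrier R \<Longrightarrow> I \<subseteq> rad R I"
proof
  fix x assume "I \<subseteq> carrier R" "x \<in> I"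
  then have "x \<in> carrier R" "x [^] (1::nat) \<in> I" by auto
  then show "x \<in> rad R I" unfolding rad_def by blast
qed

lemma rad_rad: "rad R (rad R I) = rad R I"
proof
  show "rad R (rad R I) \<subseteq> rad R I"
  proof
    fix x assume "x \<in> rad R (rad R I)"
    then obtain n k where x: "x \<in> carrier R" "(x [^] (n::nat)) [^] (k::nat) \<in> I" by (auto simp: rad_def)
    then have "x [^] (n * k) \<in> I" by (simp add: nat_pow_pow)
    then show "x \<in> rad R I" using x unfolding rad_def by blast
  qed
  show "rad R I \<subseteq> rad R (rad R I)" by (rule subset_rad) (auto simp: rad_def)
qed

lemma pow_not_nil:
  assumes "a \<in> carrier R" "a \<notin> nilrad R" shows "a [^] (n::nat) \<notin> nilrad R"
proof
  assume "a [^] n \<in> nilrad R"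
  then obtain k where "(a [^] n) [^] (k::nat) \<in> {\<zero>}" by (auto simp: nilrad_def rad_def)
  then have "a [^] (n * k) \<in> {\<zero>}" using assms by (simp add: nat_pow_pow)
  then show False using assms unfolding nilrad_def rad_def by blast
qed

lemma rad_proper:
  assumes "ideal I R" "I \<noteq> carrier R" shows "rad R I \<noteq> carrier R"
proof
  assume "rad R I = carrier R"
  then have "\<one> \<in> rad R I" by simp
  then have "\<one> \<in> I" by (auto simp: rad_def)
  then show False using assms ideal.one_imp_carrier by blast
qed

end

theorem proposition2p17:
  fixes R (structure) and \<delta> :: "'a set \<Rightarrow> 'a set" and I :: "'a set"
  assumes "cring R" and "\<one>\<^bsub>R\<^esub> \<noteq> \<zero>\<^bsub>R\<^esub>"
    and "expansion R \<delta>"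
    and "ideal I R" and "I \<noteq> carrier R"
    and "rad R (\<delta> I) = \<delta> (rad R I)"
  shows "(delta_n_ideal R \<delta> I \<longrightarrow> delta_n_ideal R \<delta> (rad R I))
     \<and> (quasi_n_ideal R I \<longleftrightarrow> n_ideal R (rad R I))"
proof -
  interpret cring R by fact
  have rI: "ideal (rad R I) R" by (rule rad_ideal[OF assms(4)])
  have rP: "rad R I \<noteq> carrier R" by (rule rad_proper[OF assms(4,5)])
  have Isub: "I \<subseteq> rad R I"
    by (rule subset_rad) (rule additive_subgroup.a_subset[OF ideal.axioms(1)[OF assms(4)]])
  have key: "b \<in> rad R (\<delta> I)"
    if dn: "delta_n_ideal R \<delta> I" and a: "a \<in> carrier R" and b: "b \<in> carrier R"
      and ab: "a \<otimes> b \<in> rad R I" and an: "a \<notin> nilrad R" for a b \<delta>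
  proof -
    obtain n where n: "(a \<otimes> b) [^] (n::nat) \<in> I" using ab by (auto simp: rad_def)
    then have "a [^] n \<otimes> b [^] n \<in> I" using a b by (simp add: pow_mult_distrib[OF m_comm])
    moreover have "\<forall>a \<in> carrier R. \<forall>b \<in> carrier R.
        a \<otimes> b \<in> I \<longrightarrow> a \<notin> nilrad R \<longrightarrow> b \<in> \<delta> I"
      using dn unfolding delta_n_ideal_def by (elim conjE)
    ultimately have "b [^] n \<in> \<delta> I"
      using nat_pow_closed[OF a] nat_pow_closed[OF b] pow_not_nil[OF a an] by blast
    then show ?thesis using b unfolding rad_def by blast
  qed
  have p1: "delta_n_ideal R \<delta> I \<longrightarrow> delta_n_ideal R \<delta> (rad R I)"
  proof
    assume dn: "delta_n_ideal R \<delta> I"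
    have "\<forall>a \<in> carrier R. \<forall>b \<in> carrier R.
        a \<otimes> b \<in> rad R I \<longrightarrow> a \<notin> nilrad R \<longrightarrow> b \<in> \<delta> (rad R I)"
      using key[OF dn] assms(6) by simp
    then show "delta_n_ideal R \<delta> (rad R I)"
      using rI rP unfolding delta_n_ideal_def[of R \<delta> "rad R I"] by simp
  qed
  have p2: "quasi_n_ideal R I \<longleftrightarrow> n_ideal R (rad R I)"
  proof
    assume q: "quasi_n_ideal R I"
    have "\<forall>a \<in> carrier R. \<forall>b \<in> carrier R.
        a \<otimes> b \<in> rad R I \<longrightarrow> a \<notin> nilrad R \<longrightarrow> b \<in> rad R I"
    proof (intro ballI impI)
      fix a b assume "a \<in> carrier R" "b \<in> carrier R" "a \<otimes> b \<in> rad R I" "a \<notin> nilrad R"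
      from key[of "rad R", OF q[unfolded quasi_n_ideal_def] this]
      show "b \<in> rad R I" unfolding rad_rad .
    qed
    with rI rP show "n_ideal R (rad R I)"
      unfolding n_ideal_def by (intro conjI)
  next
    assume h: "n_ideal R (rad R I)"
    have "\<forall>a \<in> carrier R. \<forall>b \<in> carrier R.
        a \<otimes> b \<in> I \<longrightarrow> a \<notin> nilrad R \<longrightarrow> b \<in> rad R I"
    proof (intro ballI impI)
      fix a b assume "a \<in> carrier R" "b \<in> carrier R" "a \<otimes> b \<in> I" "a \<notin> nilrad R"
      moreover have "a \<otimes> b \<in> rad R I" using Isub calculation(3) by (rule subsetD)
      moreover have "\<forall>a \<in> carrier R. \<forall>b \<in> carrier R.
        a \<otimes> b \<in> rad R I \<longrightarrow> a \<notin> nilrad R \<longrightarrow> b \<in> rad R I"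
        using h unfolding n_ideal_def by (elim conjE)
      ultimately show "b \<in> rad R I" by blast
    qed
    with assms(4,5) show "quasi_n_ideal R I"
      unfolding quasi_n_ideal_def delta_n_ideal_def by (intro conjI)
  qed
  show ?thesis using p1 p2 by blast
qed

end
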